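(* Let $N\ge2$ and $1\le k\le N$. Then, as polynomials in $\xi_1,\dots,\xi_N$, \[ \sum_{\sigma\in S_N}\operatorname{sgn}(\sigma)\prod_{j=1}^k(1-\xi_{\sigma(j)})^{j-1}\prod_{j=k+1}^N(1-\xi_{\sigma(j)})^{j-2}\;\xi_{\sigma(1)}^{N-1}\xi_{\sigma(2)}^{N-2}\cdots\xi_{\sigma(N-1)}^{1}=(-1)^{N(N-1)/2}\prod_{1\le i<j\le N}(\xi_j-\xi_i). \] *)

theory Defs
  imports "HOL-Combinatorics.Permutations"
begin

end

theory Submission
  imports Defs "Jordan_Normal_Form.Determinant"
begin

lemma perm_sum_det:
  fixes G :: "nat \<Rightarrow> nat \<Rightarrow> 'a::comm_ring_1"
  shows "(\<Sum>\<sigma> | \<sigma> permutes {1..N}. of_int (sign \<sigma>) * (\<Prod>j\<in>{1..N}. G j (\<sigma> j)))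
       = det (mat N N (\<lambda>(a,b). G (b+1) (a+1)))"
proof -
  let ?j = "map_permutation {1..N} (\<lambda>x. x - 1)"
  let ?i = "map_permutation {0..<N} Suc"
  have b1: "bij_betw (\<lambda>x. x - 1) {1..N} {0..<N}"
    by (rule bij_betw_byWitness[of _ Suc]) auto
  have b2: "bij_betw Suc {0..<N} {1..N}"
    by (rule bij_betw_byWitness[of _ "\<lambda>x. x - 1"]) auto
  have inj2: "inj_on Suc {0..<N}" using b2 by (simp add: bij_betw_def)
  have img: "{1..N} = Suc ` {0..<N}" using b2 by (simp add: bij_betw_def)
  have "det (mat N N (\<lambda>(a,b). G (b+1) (a+1))) =
     (\<Sum>p | p permutes {0..<N}. of_int (sign p) * (\<Prod>j<N. G (j+1) (p j + 1)))"
    by (subst det_col[of _ N]) auto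
  also have "\<dots> = (\<Sum>\<sigma> | \<sigma> permutes {1..N}. of_int (sign \<sigma>) * (\<Prod>j\<in>{1..N}. G j (\<sigma> j)))"
  proof (rule sum.reindex_bij_witness[of _ ?j ?i])
    fix a assume a: "a \<in> {p. p permutes {0..<N}}"
    show "?j (?i a) = a"
      by (rule map_permutation_compose_inv[OF b2]) (use a in auto)
    show "?i a \<in> {\<sigma>. \<sigma> permutes {1..N}}"
      using map_permutation_permutes[OF b2] a by auto
    have ap: "?i a (Suc x) = Suc (a x)" if "x < N" for x
      using map_permutation_apply[OF inj2, of x a] that by auto
    have "(\<Prod>j\<in>{1..N}. G j (?i a j)) = (\<Prod>j<N. G (Suc j) (?i a (Suc j)))"
      unfolding img by (subst prod.reindex) (auto simp: lessThan_atLeast0)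
    also have "\<dots> = (\<Prod>j<N. G (j+1) (a j + 1))"
      by (rule prod.cong) (use ap in auto)
    finally show "of_int (sign (?i a)) * (\<Prod>j\<in>{1..N}. G j (?i a j)) = of_int (sign a) * (\<Prod>j<N. G (j+1) (a j + 1))"
      using sign_map_permutation[OF inj2, of a] a by simp
  next
    fix b assume b: "b \<in> {\<sigma>. \<sigma> permutes {1..N}}"
    show "?i (?j b) = b"
      by (rule map_permutation_compose_inv[OF b1]) (use b in auto)
    show "?j b \<in> {p. p permutes {0..<N}}"
      using map_permutation_permutes[OF b1] b by auto
  qed
  finally show ?thesis ..
qed

lemma vdm:
  fixes x :: "nat \<Rightarrow> 'a::comm_ring_1"
  shows "det (mat n n (\<lambda>(i,j). x i ^ (n - 1 - j))) = (\<Prod>i<n. \<Prod>j\<in>{i+1..<n}. (x i - x j))"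
proof (induction n)
  case 0
  then show ?case by simp
next
  case (Suc n)
  define M where "M = mat (Suc n) (Suc n) (\<lambda>(i,j). x i ^ (Suc n - 1 - j))"
  define E where "E = mat (Suc n) (Suc n) (\<lambda>(i,j). (if i = j then 1 else 0) + (if i = Suc j then - x n else 0))"
  define A where "A = mat (Suc n) (Suc n) (\<lambda>(i,j). if j < n then x i ^ (n-1-j) * (x i - x n) else 1)"
  define D where "D = mat n n (\<lambda>(i,j). if i = j then x i - x n else 0)"
  define V where "V = mat n n (\<lambda>(i,j). x i ^ (n - 1 - j))"
  have M: "M \<in> carrier_mat (Suc n) (Suc n)" and E: "E \<in> carrier_mat (Suc n) (Suc n)"
    and A: "A \<in> carrier_mat (Suc n) (Suc n)" and D: "D \<in> carrier_mat n n" and V: "V \<in> carrier_mat n n"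
    by (auto simp: M_def E_def A_def D_def V_def)
  have detE: "det E = 1"
    by (subst det_lower_triangular[OF _ E]) (auto simp: E_def prod_list_diag_prod)
  have ME: "M * E = A"
  proof (rule eq_matI)
    fix i j assume i: "i < dim_row A" and j: "j < dim_col A"
    have "(M * E) $$ (i,j) = (\<Sum>t<Suc n. x i ^ (n - t) * ((if t = j then 1 else 0) + (if t = Suc j then - x n else 0)))"
      using i j by (auto simp: M_def E_def A_def scalar_prod_def lessThan_atLeast0 intro!: sum.cong)
    also have "\<dots> = (\<Sum>t<Suc n. (if t = j then x i ^ (n - t) else 0)) + (\<Sum>t<Suc n. (if t = Suc j then - x n * x i ^ (n - t) else 0))"
      by (subst sum.distrib[symmetric]) (rule sum.cong, auto)
    also have "\<dots> = A $$ (i,j)"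
    proof (cases "j < n")
      case True
      then have "n - j = Suc (n - 1 - j)" by auto
      then show ?thesis using i j True by (simp add: A_def algebra_simps)
    next
      case False
      then show ?thesis using i j by (simp add: A_def)
    qed
    finally show "(M * E) $$ (i,j) = A $$ (i,j)" .
  qed (auto simp: M_def E_def A_def)
  have "det M = det A"
    using det_mult[OF M E] detE ME by simp
  also have "det A = (\<Sum>j<Suc n. A $$ (n,j) * cofactor A n j)"
    by (rule laplace_expansion_row[OF A]) simp
  also have "\<dots> = cofactor A n n"
    by (subst sum.remove[of _ n]) (auto simp: A_def intro!: sum.neutral)
  also have "\<dots> = det (mat_delete A n n)"
    by (simp add: cofactor_def)
  also have "mat_delete A n n = D * V"
  proof (rule eq_matI)
    fix i j assume i: "i < dim_row (D * V)" and j: "j < dim_col (D * V)"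
    have "(D * V) $$ (i,j) = (\<Sum>t<n. (if i = t then x i - x n else 0) * x t ^ (n - 1 - j))"
      using i j D V by (auto simp: D_def V_def scalar_prod_def lessThan_atLeast0 intro!: sum.cong)
    also have "\<dots> = (\<Sum>t<n. if i = t then (x i - x n) * x i ^ (n - 1 - j) else 0)"
      by (rule sum.cong) auto
    also have "\<dots> = (x i - x n) * x i ^ (n - 1 - j)"
      using i D by simp
    finally show "mat_delete A n n $$ (i,j) = (D * V) $$ (i,j)"
      using i j D V by (simp add: mat_delete_def A_def mult.commute)
  qed (use D V in \<open>auto simp: A_def\<close>)
  also have "det (D * V) = det D * det V"
    by (rule det_mult[OF D V])
  also have "det D = (\<Prod>i<n. x i - x n)"
    by (subst det_upper_triangular[OF _ D]) (auto simp: D_def prod_list_diag_prod lessThan_atLeast0 upper_triangular_def)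
  also have "det V = (\<Prod>i<n. \<Prod>j\<in>{i+1..<n}. (x i - x j))"
    using Suc.IH by (simp add: V_def)
  also have "(\<Prod>i<n. x i - x n) * (\<Prod>i<n. \<Prod>j\<in>{i+1..<n}. (x i - x j)) = (\<Prod>i<Suc n. \<Prod>j\<in>{i+1..<Suc n}. (x i - x j))"
    by (simp add: prod.op_ivl_Suc prod.distrib mult.commute)
  finally show ?case by (simp add: M_def)
qed

lemma poly_sum_lt:
  fixes p :: "'a::comm_ring_1 poly"
  assumes "degree p < n"
  shows "poly p x = (\<Sum>i<n. coeff p i * x ^ i)"
proof -
  have "poly p x = (\<Sum>i\<le>degree p. coeff p i * x ^ i)" by (rule poly_altdef)
  also have "\<dots> = (\<Sum>i<n. coeff p i * x ^ i)"
    by (rule sum.mono_neutral_left) (use assms in \<open>auto simp: coeff_eq_0\<close>)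
  finally show ?thesis .
qed

lemma poly_det:
  fixes y :: "nat \<Rightarrow> 'a::comm_ring_1" and P :: "nat \<Rightarrow> 'a poly"
  assumes deg: "\<And>j. j < N \<Longrightarrow> degree (P j) < N"
    and tri: "\<And>j t. j < N \<Longrightarrow> t < N \<Longrightarrow> j < t \<Longrightarrow> coeff (P j) (N - Suc t) = 0"
    and dg: "\<And>j. j < N \<Longrightarrow> coeff (P j) (N - Suc j) = 1"
  shows "det (mat N N (\<lambda>(i,j). poly (P j) (y i))) = det (mat N N (\<lambda>(i,j). y i ^ (N - 1 - j)))"
proof -
  define C where "C = mat N N (\<lambda>(t,j). coeff (P j) (N - Suc t))"
  define V where "V = mat N N (\<lambda>(i,j). y i ^ (N - 1 - j))"
  have C: "C \<in> carrier_mat N N" and V: "V \<in> carrier_mat N N" by (auto simp: C_def V_def)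
  have detC: "det C = 1"
    by (subst det_upper_triangular[OF _ C]) (auto simp: C_def prod_list_diag_prod upper_triangular_def tri dg)
  have VC: "V * C = mat N N (\<lambda>(i,j). poly (P j) (y i))"
  proof (rule eq_matI)
    fix i j assume i: "i < dim_row (mat N N (\<lambda>(i,j). poly (P j) (y i)))"
      and j: "j < dim_col (mat N N (\<lambda>(i,j). poly (P j) (y i)))"
    have "(V * C) $$ (i,j) = (\<Sum>t<N. (\<lambda>d. coeff (P j) d * y i ^ d) (N - Suc t))"
      using i j by (auto simp: V_def C_def scalar_prod_def lessThan_atLeast0 mult.commute intro!: sum.cong)
    also have "\<dots> = (\<Sum>d<N. coeff (P j) d * y i ^ d)"
      by (rule sum.nat_diff_reindex)
    also have "\<dots> = poly (P j) (y i)"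
      using deg j by (intro poly_sum_lt[symmetric]) auto
    finally show "(V * C) $$ (i,j) = mat N N (\<lambda>(i,j). poly (P j) (y i)) $$ (i,j)"
      using i j by simp
  qed (auto simp: V_def C_def)
  show ?thesis
    using det_mult[OF V C] detC VC by (simp add: V_def)
qed

lemma prod_shift_Suc:
  "(\<Prod>j\<in>{Suc a..N}. g j) = (\<Prod>j\<in>{a..<N}. (g (Suc j) :: 'a::comm_monoid_mult))"
  by (subst atLeastLessThanSuc_atLeastAtMost[symmetric]) (rule prod.shift_bounds_Suc_ivl)

lemma gauss2: "(\<Sum>i<N. i) * 2 = N*(N-1::nat)"
  by (induction N) (auto simp: algebra_simps)

theorem mainTheorem8:
  fixes N k :: nat and \<xi> :: "nat \<Rightarrow> 'a::comm_ring_1"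
  assumes "N \<ge> 2" and "1 \<le> k" and "k \<le> N"
  shows "(\<Sum>\<sigma> | \<sigma> permutes {1..N}.
            of_int (sign \<sigma>)
            * (\<Prod>j\<in>{1..k}. (1 - \<xi> (\<sigma> j)) ^ (j - 1))
            * (\<Prod>j\<in>{k+1..N}. (1 - \<xi> (\<sigma> j)) ^ (j - 2))
            * (\<Prod>j\<in>{1..N}. \<xi> (\<sigma> j) ^ (N - j)))
         = (-1) ^ (N * (N - 1) div 2) * (\<Prod>i\<in>{1..N}. \<Prod>j\<in>{i+1..N}. (\<xi> j - \<xi> i))"
proof -
  define h where "h = (\<lambda>j (y::'a). (if j \<le> k then (1 - y) ^ (j - 1) else (1 - y) ^ (j - 2)) * y ^ (N - j))"
  have split: "{1..N} = {1..k} \<union> {k+1..N}" using assms by auto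
  have step1: "(\<Prod>j\<in>{1..k}. (1 - \<xi> (\<sigma> j)) ^ (j - 1))
            * (\<Prod>j\<in>{k+1..N}. (1 - \<xi> (\<sigma> j)) ^ (j - 2))
            * (\<Prod>j\<in>{1..N}. \<xi> (\<sigma> j) ^ (N - j)) = (\<Prod>j\<in>{1..N}. h j (\<xi> (\<sigma> j)))" for \<sigma>
  proof -
    have "(\<Prod>j\<in>{1..N}. (if j \<le> k then (1 - \<xi> (\<sigma> j)) ^ (j - 1) else (1 - \<xi> (\<sigma> j)) ^ (j - 2)))
       = (\<Prod>j\<in>{1..k}. (if j \<le> k then (1 - \<xi> (\<sigma> j)) ^ (j - 1) else (1 - \<xi> (\<sigma> j)) ^ (j - 2)))
         * (\<Prod>j\<in>{k+1..N}. (if j \<le> k then (1 - \<xi> (\<sigma> j)) ^ (j - 1) else (1 - \<xi> (\<sigma> j)) ^ (j - 2)))"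
      unfolding split by (rule prod.union_disjoint) auto
    also have "\<dots> = (\<Prod>j\<in>{1..k}. (1 - \<xi> (\<sigma> j)) ^ (j - 1)) * (\<Prod>j\<in>{k+1..N}. (1 - \<xi> (\<sigma> j)) ^ (j - 2))"
      by (intro arg_cong2[where f="(*)"] prod.cong) auto
    finally show ?thesis by (simp add: h_def prod.distrib)
  qed
  define P where "P = (\<lambda>j. monom (1::'a) (N - Suc j) * [:1, -1:] ^ (if Suc j \<le> k then j else j - 1))"
  define y where "y = (\<lambda>i. \<xi> (Suc i))"
  have "(\<Sum>\<sigma> | \<sigma> permutes {1..N}.
            of_int (sign \<sigma>)
            * (\<Prod>j\<in>{1..k}. (1 - \<xi> (\<sigma> j)) ^ (j - 1))
            * (\<Prod>j\<in>{k+1..N}. (1 - \<xi> (\<sigma> j)) ^ (j - 2))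
            * (\<Prod>j\<in>{1..N}. \<xi> (\<sigma> j) ^ (N - j)))
      = (\<Sum>\<sigma> | \<sigma> permutes {1..N}. of_int (sign \<sigma>) * (\<Prod>j\<in>{1..N}. (\<lambda>j c. h j (\<xi> c)) j (\<sigma> j)))"
    by (intro sum.cong refl) (metis (no_types) step1 mult.assoc)
  also have "\<dots> = det (mat N N (\<lambda>(a,b). h (b+1) (\<xi> (a+1))))"
    by (rule perm_sum_det)
  also have "mat N N (\<lambda>(a,b). h (b+1) (\<xi> (a+1))) = mat N N (\<lambda>(i,j). poly (P j) (y i))"
    by (rule cong_mat) (auto simp: h_def P_def y_def poly_monom)
  also have "det \<dots> = det (mat N N (\<lambda>(i,j). y i ^ (N - 1 - j)))"
  proof (rule poly_det)
    fix j assume j: "j < N"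
    define e where "e = (if Suc j \<le> k then j else j - 1)"
    have d1: "degree (P j) \<le> (N - Suc j) + degree ([:1, -1:] ^ e :: 'a poly)"
      unfolding P_def e_def by (rule order.trans[OF degree_mult_le]) (simp add: degree_monom_le)
    have d2: "degree ([:1, -1:] ^ e :: 'a poly) \<le> degree ([:1, -1:] :: 'a poly) * e"
      by (rule degree_power_le)
    have d3: "degree ([:1, -1:] :: 'a poly) \<le> 1" by simp
    have "e \<le> j" by (simp add: e_def)
    have d4: "degree ([:1, -1:] ^ e :: 'a poly) \<le> e"
      using d2 d3 mult_le_mono1[OF d3, of e] by simp
    show "degree (P j) < N"
      using d1 d4 \<open>e \<le> j\<close> j by linarith
  next
    fix j t assume "j < N" "t < N" "j < t"
    then show "coeff (P j) (N - Suc t) = 0" by (simp add: P_def coeff_monom_mult)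
  next
    fix j assume "j < N"
    then show "coeff (P j) (N - Suc j) = 1" by (simp add: P_def coeff_monom_mult coeff_0_power)
  qed
  also have "\<dots> = (\<Prod>i<N. \<Prod>j\<in>{i+1..<N}. (y i - y j))"
    by (rule vdm)
  also have "\<dots> = (-1) ^ (N * (N - 1) div 2) * (\<Prod>i\<in>{1..N}. \<Prod>j\<in>{i+1..N}. (\<xi> j - \<xi> i))"
  proof -
    define s where "s = (\<Sum>i<N. N - Suc i)"
    have s: "s = N * (N - 1) div 2"
      using gauss2[of N] sum.nat_diff_reindex[of "\<lambda>x. x" N] by (simp add: s_def)
    have "(\<Prod>i\<in>{1..N}. \<Prod>j\<in>{i+1..N}. (\<xi> j - \<xi> i)) = (\<Prod>i<N. \<Prod>j\<in>{i+1..<N}. (y j - y i))"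
      by (simp add: prod_shift_Suc lessThan_atLeast0 y_def)
    also have "\<dots> = (\<Prod>i<N. (-1) ^ (N - Suc i) * (\<Prod>j\<in>{i+1..<N}. (y i - y j)))"
    proof (rule prod.cong[OF refl])
      fix i assume "i \<in> {..<N}"
      have "(\<Prod>j\<in>{i+1..<N}. (y j - y i)) = (\<Prod>j\<in>{i+1..<N}. (-1) * (y i - y j))"
        by (rule prod.cong) auto
      also have "\<dots> = (-1) ^ (N - Suc i) * (\<Prod>j\<in>{i+1..<N}. (y i - y j))"
        by (subst prod.distrib) simp
      finally show "(\<Prod>j\<in>{i+1..<N}. (y j - y i)) = (-1) ^ (N - Suc i) * (\<Prod>j\<in>{i+1..<N}. (y i - y j))" .
    qed
    also have "\<dots> = (-1) ^ s * (\<Prod>i<N. \<Prod>j\<in>{i+1..<N}. (y i - y j))"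
      by (simp add: prod.distrib s_def power_sum)
    finally have "(-1) ^ s * (\<Prod>i\<in>{1..N}. \<Prod>j\<in>{i+1..N}. (\<xi> j - \<xi> i)) = (-1)^s * (-1)^s * (\<Prod>i<N. \<Prod>j\<in>{i+1..<N}. (y i - y j))"
      by (simp add: mult.assoc)
    also have "(-1)^s * (-1)^s = (1::'a)" by (simp add: power_add[symmetric])
    finally show ?thesis using s by simp
  qed
  finally show ?thesis .
qed

end
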